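(* For every $k\in\mathbb{N}$, every $v\in V^X$ and every $i\in\Pi$: if $\sup\{\mathrm{Cost}_i(\rho)\mid\rho\in\Lambda^k(v)\}=+\infty$, then there exists a play $\rho\in\Lambda^k(v)$ with $\mathrm{Cost}_i(\rho)=+\infty$.
   Context: Let $\mathcal{G}$ be a quantitative reachability game on an arena $G=(\Pi,V,(V_i)_{i\in\Pi},E)$ (finite player set $\Pi$, finite vertex set $V$ with $|V|\ge2$, $|\Pi|\le|V|$, partition $(V_i)$, every vertex has a successor) with targets $F_i\subseteq V$ and costs $\mathrm{Cost}_i(\rho)=$ least $k$ with $\rho_k\in F_i$ (or $+\infty$); let $v_0\in V$. Extended game: arena $X$ with vertices $V^X=V\times2^\Pi$, edges $((v,I),(v',I'))\in E^X$ iff $(v,v')\in E$ and $I'=I\cup\{i:v'\in F_i\}$, $(v,I)\in V^X_i$ iff $v\in V_i$, targets $F^X_i=\{(v,I):i\in I\}$ with corresponding reachability costs $\mathrm{Cost}_i$; $x_0=(v_0,\{i:v_0\in F_i\})$. $I(u)$ is the second component of $u$. $\mathcal{I}$ is the set of $I$ such that some $(v,I)$ is reachable from $x_0$, $N=|\mathcal{I}|$, and $J_1<\dots<J_N$ is a fixed total order of $\mathcal{I}$ extending the partial order $I<I'$ iff $I\ne I'$ and some $(v',I')$ is reachable from some $(v,I)$. $V^{\ge J_n}=\{(v,J_m):v\in V,m\ge n\}$. Labelings: for $\lambda:V^X\to\mathbb{N}\cup\{+\infty\}$, a play $\rho$ of $X$ is $\lambda$-consistent if $\mathrm{Cost}_i(\rho_{\ge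 n})\le\lambda(\rho_n)$ for all $n$ and $i$ with $\rho_n\in V^X_i$. $\lambda^0(u)=0$ if $u\in V^X_i$ and $i\in I(u)$, else $+\infty$. The update of $\lambda^k$ w.r.t. $V^{\ge J_n}$ keeps values outside $V^{\ge J_n}$ and, for $u\in V^{\ge J_n}\cap V^X_i$, sets $\lambda^{k+1}(u)=0$ if $i\in I(u)$, otherwise $1+\min_{(u,u')\in E^X}\sup\{\mathrm{Cost}_i(\rho):\rho\in\Lambda^k(u')\}$ ($1+(+\infty)=+\infty$). The sequence $(\lambda^k)$ is generated by $n_0=N$, $\lambda^{k+1}=$ update of $\lambda^k$ w.r.t. $V^{\ge J_{n_k}}$, $n_{k+1}=n_k-1$ if $\lambda^{k+1}=\lambda^k$ and $n_k>1$, else $n_{k+1}=n_k$. $\Lambda^k(v)$ denotes the set of $\lambda^k$-consistent plays of $X$ starting at $v$. *)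

theory Defs
  imports Main "HOL-Library.Extended_Nat"
begin

text \<open>Arena: players Pi, vertices V, ownership function owner (encoding the partition
  (V_i)), edges E, targets F. The extended game X has vertex set V x 2^Pi.\<close>

definition VX :: "'p set \<Rightarrow> 'v set \<Rightarrow> ('v \<times> 'p set) set" where
  "VX Pi V = V \<times> Pow Pi"

definition EdgX :: "'p set \<Rightarrow> ('v \<times> 'v) set \<Rightarrow> ('p \<Rightarrow> 'v set)
    \<Rightarrow> (('v \<times> 'p set) \<times> ('v \<times> 'p set)) set" where
  "EdgX Pi E F = {((v, I), (v', I')). (v, v') \<in> E \<and> I \<subseteq> Pi \<and> I' = I \<union> {i \<in> Pi. v' \<in> F i}}"

definition x0 :: "'p set \<Rightarrow> ('p \<Rightarrow> 'v set) \<Rightarrow> 'v \<Rightarrow> 'v \<times> 'p set" where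
  "x0 Pi F v0 = (v0, {i \<in> Pi. v0 \<in> F i})"

definition xplay :: "'p set \<Rightarrow> 'v set \<Rightarrow> ('v \<times> 'v) set \<Rightarrow> ('p \<Rightarrow> 'v set)
    \<Rightarrow> (nat \<Rightarrow> 'v \<times> 'p set) \<Rightarrow> bool" where
  "xplay Pi V E F \<rho> \<longleftrightarrow> \<rho> 0 \<in> VX Pi V \<and> (\<forall>n. (\<rho> n, \<rho> (Suc n)) \<in> EdgX Pi E F)"

text \<open>Reachability cost for target F^X_i = {(v,I). i \<in> I}.\<close>
definition costX :: "'p \<Rightarrow> (nat \<Rightarrow> 'v \<times> 'p set) \<Rightarrow> enat" where
  "costX i \<rho> = (if \<exists>k. i \<in> snd (\<rho> k) then enat (LEAST k. i \<in> snd (\<rho> k)) else \<infinity>)"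

definition consistent :: "('v \<Rightarrow> 'p) \<Rightarrow> ('v \<times> 'p set \<Rightarrow> enat) \<Rightarrow> (nat \<Rightarrow> 'v \<times> 'p set) \<Rightarrow> bool" where
  "consistent owner lam \<rho> \<longleftrightarrow> (\<forall>n. costX (owner (fst (\<rho> n))) (\<lambda>m. \<rho> (n + m)) \<le> lam (\<rho> n))"

definition Lambda :: "'p set \<Rightarrow> 'v set \<Rightarrow> ('v \<times> 'v) set \<Rightarrow> ('p \<Rightarrow> 'v set) \<Rightarrow> ('v \<Rightarrow> 'p)
    \<Rightarrow> ('v \<times> 'p set \<Rightarrow> enat) \<Rightarrow> 'v \<times> 'p set \<Rightarrow> (nat \<Rightarrow> 'v \<times> 'p set) set" where
  "Lambda Pi V E F owner lam u = {\<rho>. xplay Pi V E F \<rho> \<and> \<rho> 0 = u \<and> consistent owner lam \<rho>}"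

definition lam0 :: "('v \<Rightarrow> 'p) \<Rightarrow> 'v \<times> 'p set \<Rightarrow> enat" where
  "lam0 owner u = (if owner (fst u) \<in> snd u then 0 else \<infinity>)"

definition Iset :: "'p set \<Rightarrow> ('v \<times> 'v) set \<Rightarrow> ('p \<Rightarrow> 'v set) \<Rightarrow> 'v \<Rightarrow> 'p set set" where
  "Iset Pi E F v0 = {I. \<exists>v. (x0 Pi F v0, (v, I)) \<in> (EdgX Pi E F)\<^sup>*}"

definition Iless :: "'p set \<Rightarrow> ('v \<times> 'v) set \<Rightarrow> ('p \<Rightarrow> 'v set) \<Rightarrow> 'p set \<Rightarrow> 'p set \<Rightarrow> bool" where
  "Iless Pi E F I I' \<longleftrightarrow> I \<noteq> I' \<and> (\<exists>v v'. ((v, I), (v', I')) \<in> (EdgX Pi E F)\<^sup>*)"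

definition Vge :: "'v set \<Rightarrow> (nat \<Rightarrow> 'p set) \<Rightarrow> nat \<Rightarrow> nat \<Rightarrow> ('v \<times> 'p set) set" where
  "Vge V J N n = {(v, J m) | v m. v \<in> V \<and> n \<le> m \<and> m \<le> N}"

definition update :: "'p set \<Rightarrow> 'v set \<Rightarrow> ('v \<times> 'v) set \<Rightarrow> ('p \<Rightarrow> 'v set) \<Rightarrow> ('v \<Rightarrow> 'p)
    \<Rightarrow> (nat \<Rightarrow> 'p set) \<Rightarrow> nat \<Rightarrow> ('v \<times> 'p set \<Rightarrow> enat) \<Rightarrow> nat \<Rightarrow> 'v \<times> 'p set \<Rightarrow> enat" where
  "update Pi V E F owner J N lam n u =
     (if u \<in> Vge V J N n then
        (if owner (fst u) \<in> snd u then 0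
         else 1 + (INF u' \<in> {u'. (u, u') \<in> EdgX Pi E F}.
                     Sup (costX (owner (fst u)) ` Lambda Pi V E F owner lam u')))
      else lam u)"

primrec lamseq :: "'p set \<Rightarrow> 'v set \<Rightarrow> ('v \<times> 'v) set \<Rightarrow> ('p \<Rightarrow> 'v set) \<Rightarrow> ('v \<Rightarrow> 'p)
    \<Rightarrow> (nat \<Rightarrow> 'p set) \<Rightarrow> nat \<Rightarrow> nat \<Rightarrow> ('v \<times> 'p set \<Rightarrow> enat) \<times> nat" where
  "lamseq Pi V E F owner J N 0 = (lam0 owner, N)"
| "lamseq Pi V E F owner J N (Suc k) =
     (let (l, n) = lamseq Pi V E F owner J N k;
          l' = update Pi V E F owner J N l n
      in (l', if l' = l \<and> n > 1 then n - 1 else n))"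

end

theory Submission
  imports Defs
begin

lemma koenig_aux:
  fixes P :: "nat \<Rightarrow> (nat \<Rightarrow> 'a) set" and A :: "'a set"
  assumes finA: "finite A"
    and inA: "\<And>m r n. r \<in> P m \<Longrightarrow> r n \<in> A"
    and dec: "\<And>m m'. m \<le> m' \<Longrightarrow> P m' \<subseteq> P m"
    and ne: "\<And>m. P m \<noteq> {}"
  shows "\<exists>\<rho>. \<forall>n. \<exists>r\<in>P n. \<forall>j\<le>n. r j = \<rho> j"
proof -
  define good where "good n f \<longleftrightarrow> (\<forall>m. \<exists>r\<in>P m. \<forall>j<n. r j = f j)" for n f
  have step: "\<exists>x. good (Suc n) (f(n := x))" if g: "good n f" for n f
  proof (rule ccontr)
    assume "\<not> ?thesis"
    hence "\<forall>x. \<exists>m. \<forall>r\<in>P m. \<not> (\<forall>j<Suc n. r j = (f(n:=x)) j)"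
      unfolding good_def by blast
    then obtain mx where mx: "\<And>x r. r \<in> P (mx x) \<Longrightarrow> \<not> (\<forall>j<Suc n. r j = (f(n:=x)) j)"
      by (rule choice_iff[THEN iffD1, THEN exE]) auto
    define M where "M = Max (mx ` A)"
    from g obtain r where r: "r \<in> P M" "\<forall>j<n. r j = f j" unfolding good_def by blast
    have ra: "r n \<in> A" using inA r(1) .
    hence "mx (r n) \<le> M" unfolding M_def using finA by auto
    hence "r \<in> P (mx (r n))" using dec r(1) by blast
    from mx[OF this] show False using r(2) by (auto simp: less_Suc_eq)
  qed
  define sq where "sq = rec_nat (\<lambda>_. undefined)
      (\<lambda>n f. f(n := SOME x. good (Suc n) (f(n := x))))"
  have sq0: "sq 0 = (\<lambda>_. undefined)" unfolding sq_def by simp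
  have sqS: "sq (Suc n) = (sq n)(n := SOME x. good (Suc n) ((sq n)(n := x)))" for n
    unfolding sq_def by simp
  have goodn: "good n (sq n)" for n
  proof (induction n)
    case 0 then show ?case using ne unfolding good_def sq0 by blast
  next
    case (Suc n)
    from step[OF Suc] show ?case unfolding sqS by (rule someI_ex)
  qed
  have stab: "sq (n + d) j = sq n j" if "j < n" for n d j
    using that by (induction d) (auto simp: sqS)
  define \<rho> where "\<rho> n = sq (Suc n) n" for n
  have rho: "\<rho> j = sq n j" if "j < n" for j n
  proof -
    have "sq (Suc j + (n - Suc j)) j = sq (Suc j) j" by (rule stab) simp
    thus ?thesis using that unfolding \<rho>_def by simp
  qed
  show ?thesis
  proof (intro exI allI)
    fix n
    from goodn[of "Suc n"] obtain r where "r \<in> P n" "\<forall>j<Suc n. r j = sq (Suc n) j"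
      unfolding good_def by blast
    thus "\<exists>r\<in>P n. \<forall>j\<le>n. r j = \<rho> j" using rho by (metis less_Suc_eq_le)
  qed
qed

lemma costX_le: "costX i \<rho> \<le> enat c \<longleftrightarrow> (\<exists>k\<le>c. i \<in> snd (\<rho> k))"
proof (cases "\<exists>k. i \<in> snd (\<rho> k)")
  case True
  hence cx: "costX i \<rho> = enat (LEAST k. i \<in> snd (\<rho> k))" unfolding costX_def by (rule if_P)
  have l: "i \<in> snd (\<rho> (LEAST k. i \<in> snd (\<rho> k)))" using True by (rule LeastI_ex)
  show ?thesis
  proof
    assume "costX i \<rho> \<le> enat c"
    hence "(LEAST k. i \<in> snd (\<rho> k)) \<le> c" using cx by simp
    thus "\<exists>k\<le>c. i \<in> snd (\<rho> k)" using l by blast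
  next
    assume "\<exists>k\<le>c. i \<in> snd (\<rho> k)"
    then obtain k where k: "k \<le> c" "i \<in> snd (\<rho> k)" by blast
    have "(LEAST k. i \<in> snd (\<rho> k)) \<le> k" using k(2) by (rule Least_le)
    thus "costX i \<rho> \<le> enat c" using cx k(1) by simp
  qed
next
  case False
  hence "costX i \<rho> = \<infinity>" unfolding costX_def by (rule if_not_P)
  thus ?thesis using False by simp
qed

lemma costX_inf: "costX i \<rho> = \<infinity> \<longleftrightarrow> (\<forall>k. i \<notin> snd (\<rho> k))"
proof (cases "\<exists>k. i \<in> snd (\<rho> k)")
  case True
  hence "costX i \<rho> = enat (LEAST k. i \<in> snd (\<rho> k))" unfolding costX_def by (rule if_P)
  thus ?thesis using True by simp
next
  case False
  hence "costX i \<rho> = \<infinity>" unfolding costX_def by (rule if_not_P)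
  thus ?thesis using False by simp
qed

lemma main_gen:
  assumes finPi: "finite Pi" and finV: "finite V" and EV: "E \<subseteq> V \<times> V"
    and sup: "Sup (costX i ` Lambda Pi V E F owner lam u) = \<infinity>"
  shows "\<exists>\<rho> \<in> Lambda Pi V E F owner lam u. costX i \<rho> = \<infinity>"
proof -
  define P where "P m = {\<rho> \<in> Lambda Pi V E F owner lam u. \<forall>k\<le>m. i \<notin> snd (\<rho> k)}" for m
  have finA: "finite (VX Pi V)" unfolding VX_def using finPi finV by simp
  have inA: "r n \<in> VX Pi V" if "r \<in> P m" for m r n
  proof (cases n)
    case 0 then show ?thesis using that unfolding P_def Lambda_def xplay_def by auto
  next
    case (Suc n')
    have "(r n', r n) \<in> EdgX Pi E F" using that Suc unfolding P_def Lambda_def xplay_def by auto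
    then show ?thesis using EV unfolding EdgX_def VX_def by auto
  qed
  have dec: "P m' \<subseteq> P m" if "m \<le> m'" for m m' using that unfolding P_def by auto
  have ne: "P m \<noteq> {}" for m
  proof -
    have "enat m < \<infinity>" by simp
    hence "enat m < Sup (costX i ` Lambda Pi V E F owner lam u)" using sup by (simp only:)
    hence "\<exists>x\<in>costX i ` Lambda Pi V E F owner lam u. enat m < x" by (simp only: less_Sup_iff)
    then obtain r where r: "r \<in> Lambda Pi V E F owner lam u" "enat m < costX i r"
      by blast
    hence "\<not> costX i r \<le> enat m" by simp
    hence "\<forall>k\<le>m. i \<notin> snd (r k)" unfolding costX_le by blast
    thus ?thesis using r unfolding P_def by blast
  qed
  have "\<exists>\<rho>. \<forall>n. \<exists>r\<in>P n. \<forall>j\<le>n. r j = \<rho> j"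
  proof (rule koenig_aux[of "VX Pi V" P])
    show "finite (VX Pi V)" by (fact finA)
    show "r n \<in> VX Pi V" if "r \<in> P m" for r m n using that by (rule inA)
    show "P m' \<subseteq> P m" if "m \<le> m'" for m m' using that by (rule dec)
    show "P m \<noteq> {}" for m by (rule ne)
  qed
  then obtain \<rho> where rh: "\<And>n. \<exists>r\<in>P n. \<forall>j\<le>n. r j = \<rho> j" by blast
  have xp: "xplay Pi V E F \<rho>"
    unfolding xplay_def
  proof (intro conjI allI)
    from rh[of 0] obtain r where "r \<in> P 0" "r 0 = \<rho> 0" by auto
    then show "\<rho> 0 \<in> VX Pi V" using inA by metis
  next
    fix n
    from rh[of "Suc n"] obtain r where r: "r \<in> P (Suc n)" "\<forall>j\<le>Suc n. r j = \<rho> j" by auto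
    have "(r n, r (Suc n)) \<in> EdgX Pi E F" using r(1) unfolding P_def Lambda_def xplay_def by auto
    thus "(\<rho> n, \<rho> (Suc n)) \<in> EdgX Pi E F" using r(2) by simp
  qed
  have r0: "\<rho> 0 = u"
  proof -
    from rh[of 0] obtain r where "r \<in> P 0" "r 0 = \<rho> 0" by auto
    thus ?thesis unfolding P_def Lambda_def by auto
  qed
  have cons: "consistent owner lam \<rho>"
    unfolding consistent_def
  proof
    fix n
    show "costX (owner (fst (\<rho> n))) (\<lambda>m. \<rho> (n + m)) \<le> lam (\<rho> n)"
    proof (cases "lam (\<rho> n)")
      case (enat c)
      from rh[of "n + c"] obtain r where r: "r \<in> P (n + c)" "\<forall>j\<le>n + c. r j = \<rho> j" by auto
      have "consistent owner lam r" using r(1) unfolding P_def Lambda_def by auto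
      hence "costX (owner (fst (r n))) (\<lambda>m. r (n + m)) \<le> lam (r n)"
        unfolding consistent_def by blast
      hence "costX (owner (fst (\<rho> n))) (\<lambda>m. r (n + m)) \<le> enat c" using r(2) enat by simp
      then obtain k where "k \<le> c" "owner (fst (\<rho> n)) \<in> snd (r (n + k))"
        unfolding costX_le by blast
      hence "\<exists>k\<le>c. owner (fst (\<rho> n)) \<in> snd (\<rho> (n + k))" using r(2) by auto
      hence "costX (owner (fst (\<rho> n))) (\<lambda>m. \<rho> (n + m)) \<le> enat c" unfolding costX_le .
      thus ?thesis using enat by simp
    qed simp
  qed
  have ci: "costX i \<rho> = \<infinity>"
    unfolding costX_inf
  proof
    fix k
    from rh[of k] obtain r where r: "r \<in> P k" "\<forall>j\<le>k. r j = \<rho> j" by auto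
    thus "i \<notin> snd (\<rho> k)" unfolding P_def by auto
  qed
  show ?thesis using xp r0 cons ci unfolding Lambda_def by blast
qed

theorem proposition2p11:
  fixes Pi :: "'p set" and V :: "'v set" and owner :: "'v \<Rightarrow> 'p"
    and E :: "('v \<times> 'v) set" and F :: "'p \<Rightarrow> 'v set" and v0 :: 'v
    and J :: "nat \<Rightarrow> 'p set"
  assumes "finite Pi" and "finite V" and "card V \<ge> 2" and "card Pi \<le> card V"
    and "\<forall>v\<in>V. owner v \<in> Pi"
    and "E \<subseteq> V \<times> V" and "\<forall>v\<in>V. \<exists>v'. (v, v') \<in> E"
    and "\<forall>i\<in>Pi. F i \<subseteq> V"
    and "v0 \<in> V"
    and "bij_betw J {1..card (Iset Pi E F v0)} (Iset Pi E F v0)"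
    and "\<forall>m\<in>{1..card (Iset Pi E F v0)}. \<forall>n\<in>{1..card (Iset Pi E F v0)}.
           Iless Pi E F (J m) (J n) \<longrightarrow> m < n"
  shows "\<forall>k u i. u \<in> VX Pi V \<and> i \<in> Pi \<and>
      Sup (costX i ` Lambda Pi V E F owner (fst (lamseq Pi V E F owner J (card (Iset Pi E F v0)) k)) u) = \<infinity>
      \<longrightarrow> (\<exists>\<rho> \<in> Lambda Pi V E F owner (fst (lamseq Pi V E F owner J (card (Iset Pi E F v0)) k)) u.
             costX i \<rho> = \<infinity>)"
  using main_gen[OF assms(1,2,6)] by blast

end
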